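(* Let $\Sigma=\{a,b\}$ and consider regular expressions over $\Sigma$ generated by $\beta := \varepsilon \mid a \mid b \mid (\beta+\beta) \mid (\beta\cdot\beta) \mid (\beta^\star)$. Let $\mathcal G_2$ be the grammar with start symbol $\alpha$ and productions \begin{align*} \alpha &:= \varepsilon \mid a \mid b \mid (\alpha\cdot\alpha) \mid (\alpha^\star) \mid (\alpha_P+\alpha_P),\\ \alpha_P &:= \varepsilon \mid a \mid b \mid (\alpha\cdot\alpha) \mid (\alpha_\Sigma^\star) \mid (\alpha_P+\alpha_P),\\ \alpha_\Sigma &:= \varepsilon \mid a \mid b \mid (\alpha\cdot\alpha) \mid (\alpha^\star) \mid \gamma,\\ \gamma &:= (\alpha_{ab}+\alpha_{ab}) \mid (\alpha_{ab}+a) \mid (\alpha_{ab}+b) \mid (a+\alpha_{ab}) \mid (b+\alpha_{ab}) \mid (a+a) \mid (b+b),\\ \alpha_{ab} &:= \varepsilon \mid (\alpha\cdot\alpha) \mid (\alpha_\Sigma^\star) \mid (\alpha_P+\alpha_P). \end{align*} Then a regular expression $\beta$ over $\{a,b\}$ is generated by $\mathcal G_2$ (from the start symbol $\alpha$) if and only if the pattern $(a+b)^\star$ or $(b+a)^\star$ does not occur in a union in $\beta$, i.e., $\beta$ has no subexpression of the form $(\beta_1+\beta_2)$ with $\beta_1$ or $\beta_2$ equal (syntactically) to $((a+b)^\star)$ or $((b+a)^\star)$.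
   Context: Regular expressions are treated as syntactic trees (fully parenthesized expressions); equality of expressions here means syntactic identity. *)

theory Defs
  imports Main
begin

text \<open>Regular expressions over the alphabet {a,b}, as syntax trees
  (fully parenthesized); equality is syntactic identity.\<close>
datatype re = Eps | A | B | Plus re re | Times re re | Star re

inductive alpha and alphaP and alphaS and gamma and alphaAB where
  al_eps: "alpha Eps"
| al_a: "alpha A"
| al_b: "alpha B"
| al_times: "alpha r \<Longrightarrow> alpha s \<Longrightarrow> alpha (Times r s)"
| al_star: "alpha r \<Longrightarrow> alpha (Star r)"
| al_plus: "alphaP r \<Longrightarrow> alphaP s \<Longrightarrow> alpha (Plus r s)"
| P_eps: "alphaP Eps"
| P_a: "alphaP A"
| P_b: "alphaP B"
| P_times: "alpha r \<Longrightarrow> alpha s \<Longrightarrow> alphaP (Times r s)"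
| P_star: "alphaS r \<Longrightarrow> alphaP (Star r)"
| P_plus: "alphaP r \<Longrightarrow> alphaP s \<Longrightarrow> alphaP (Plus r s)"
| S_eps: "alphaS Eps"
| S_a: "alphaS A"
| S_b: "alphaS B"
| S_times: "alpha r \<Longrightarrow> alpha s \<Longrightarrow> alphaS (Times r s)"
| S_star: "alpha r \<Longrightarrow> alphaS (Star r)"
| S_gamma: "gamma r \<Longrightarrow> alphaS r"
| g_abab: "alphaAB r \<Longrightarrow> alphaAB s \<Longrightarrow> gamma (Plus r s)"
| g_aba: "alphaAB r \<Longrightarrow> gamma (Plus r A)"
| g_abb: "alphaAB r \<Longrightarrow> gamma (Plus r B)"
| g_aab: "alphaAB s \<Longrightarrow> gamma (Plus A s)"
| g_bab: "alphaAB s \<Longrightarrow> gamma (Plus B s)"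
| g_aa: "gamma (Plus A A)"
| g_bb: "gamma (Plus B B)"
| ab_eps: "alphaAB Eps"
| ab_times: "alpha r \<Longrightarrow> alpha s \<Longrightarrow> alphaAB (Times r s)"
| ab_star: "alphaS r \<Longrightarrow> alphaAB (Star r)"
| ab_plus: "alphaP r \<Longrightarrow> alphaP s \<Longrightarrow> alphaAB (Plus r s)"

fun subexprs :: "re \<Rightarrow> re set" where
  "subexprs Eps = {Eps}"
| "subexprs A = {A}"
| "subexprs B = {B}"
| "subexprs (Plus r s) = insert (Plus r s) (subexprs r \<union> subexprs s)"
| "subexprs (Times r s) = insert (Times r s) (subexprs r \<union> subexprs s)"
| "subexprs (Star r) = insert (Star r) (subexprs r)"

definition forbidden :: "re \<Rightarrow> bool" where
  "forbidden r \<longleftrightarrow> r = Star (Plus A B) \<or> r = Star (Plus B A)"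

end

theory Submission
  imports Defs
begin

fun ok :: "re \<Rightarrow> bool" where
  "ok Eps = True"
| "ok A = True"
| "ok B = True"
| "ok (Plus r s) = (ok r \<and> ok s \<and> \<not> forbidden r \<and> \<not> forbidden s)"
| "ok (Times r s) = (ok r \<and> ok s)"
| "ok (Star r) = ok r"

lemma ok_iff: "ok r \<longleftrightarrow>
    \<not> (\<exists>\<beta>1 \<beta>2. Plus \<beta>1 \<beta>2 \<in> subexprs r \<and> (forbidden \<beta>1 \<or> forbidden \<beta>2))"
  by (induction r) auto

lemma sound:
  "(alpha r \<longrightarrow> ok r) \<and>
   (alphaP r1 \<longrightarrow> ok r1 \<and> \<not> forbidden r1) \<and>
   (alphaS r2 \<longrightarrow> ok r2 \<and> r2 \<noteq> Plus A B \<and> r2 \<noteq> Plus B A) \<and>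
   (gamma r3 \<longrightarrow> ok r3 \<and> r3 \<noteq> Plus A B \<and> r3 \<noteq> Plus B A) \<and>
   (alphaAB r4 \<longrightarrow> ok r4 \<and> \<not> forbidden r4 \<and> r4 \<noteq> A \<and> r4 \<noteq> B)"
proof -
  have "(alpha r \<longrightarrow> ok r) \<and>
   (alphaP r1 \<longrightarrow> ok r1 \<and> \<not> forbidden r1) \<and>
   (alphaS r2 \<longrightarrow> ok r2 \<and> r2 \<noteq> Plus A B \<and> r2 \<noteq> Plus B A) \<and>
   (gamma r3 \<longrightarrow> ok r3 \<and> r3 \<noteq> Plus A B \<and> r3 \<noteq> Plus B A) \<and>
   (alphaAB r4 \<longrightarrow> ok r4 \<and> \<not> forbidden r4 \<and> r4 \<noteq> A \<and> r4 \<noteq> B)"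
    by (rule alpha_alphaP_alphaS_gamma_alphaAB.induct[of
        ok "\<lambda>r. ok r \<and> \<not> forbidden r" "\<lambda>r. ok r \<and> r \<noteq> Plus A B \<and> r \<noteq> Plus B A"
        "\<lambda>r. ok r \<and> r \<noteq> Plus A B \<and> r \<noteq> Plus B A"
        "\<lambda>r. ok r \<and> \<not> forbidden r \<and> r \<noteq> A \<and> r \<noteq> B", simplified])
      (auto simp: forbidden_def)
  then show ?thesis .
qed

lemma complete:
  "ok r \<Longrightarrow> alpha r \<and> (\<not> forbidden r \<longrightarrow> alphaP r) \<and>
     (r \<noteq> Plus A B \<and> r \<noteq> Plus B A \<longrightarrow> alphaS r) \<and>
     (\<not> forbidden r \<and> r \<noteq> A \<and> r \<noteq> B \<longrightarrow> alphaAB r)"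
proof (induction r)
  case (Plus r s)
  then have hr: "alphaP r" and hs: "alphaP s"
    and ar: "\<not> forbidden r \<and> r \<noteq> A \<and> r \<noteq> B \<longrightarrow> alphaAB r"
    and as: "\<not> forbidden s \<and> s \<noteq> A \<and> s \<noteq> B \<longrightarrow> alphaAB s"
    and fr: "\<not> forbidden r" and fs: "\<not> forbidden s" by auto
  have g: "Plus r s \<noteq> Plus A B \<and> Plus r s \<noteq> Plus B A \<longrightarrow> alphaS (Plus r s)"
  proof
    assume n: "Plus r s \<noteq> Plus A B \<and> Plus r s \<noteq> Plus B A"
    show "alphaS (Plus r s)"
    proof (rule S_gamma)
      show "gamma (Plus r s)"
      proof (cases "r = A \<or> r = B")
        case True
        then show ?thesis using n as fs
          by (cases "s = A \<or> s = B") (auto intro: alpha_alphaP_alphaS_gamma_alphaAB.intros)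
      next
        case False
        then have "alphaAB r" using ar fr by auto
        then show ?thesis using as fs
          by (cases "s = A \<or> s = B") (auto intro: alpha_alphaP_alphaS_gamma_alphaAB.intros)
      qed
    qed
  qed
  show ?case using hr hs g by (auto intro: alpha_alphaP_alphaS_gamma_alphaAB.intros)
next
  case (Star r)
  then show ?case by (auto simp: forbidden_def intro: alpha_alphaP_alphaS_gamma_alphaAB.intros)
qed (auto intro: alpha_alphaP_alphaS_gamma_alphaAB.intros)

theorem lemma1:
  shows "alpha \<beta> \<longleftrightarrow>
    \<not> (\<exists>\<beta>1 \<beta>2. Plus \<beta>1 \<beta>2 \<in> subexprs \<beta> \<and> (forbidden \<beta>1 \<or> forbidden \<beta>2))"
  using sound complete ok_iff by blast

end
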